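(* Let $N$ be a nonnegative integer. An alternating step function $\psi$ of order $N$ is uniquely determined by its Fourier coefficients $\hat\psi(0),\hat\psi(1),\dots,\hat\psi(N)$: if $\psi$ and $\varphi$ are alternating step functions of order $N$ with $\hat\psi(n)=\hat\varphi(n)$ for $n=0,\dots,N$, then $\hat\psi(n)=\hat\varphi(n)$ for all $n$, i.e. $\psi=\varphi$ a.e.
   Context: $\mathbb{T}$ is the unit circle with normalized Lebesgue measure; $\hat f(n)=\frac{1}{2\pi}\int_0^{2\pi} f(e^{i\theta})e^{-in\theta}\,d\theta$. For $c>0$ and $N$ a positive integer, an alternating step function of height $c$ and order $N$ is a real function in $L^\infty(\mathbb{T})$ that assumes (a.e.) alternately the values $c$ and $-c$ on $2N$ (nondegenerate) subarcs forming a partition of $\mathbb{T}$; an alternating step function of order $0$ is a constant function. The heights of $\psi$ and $\varphi$ are not assumed known or equal. *)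

theory Defs
  imports "HOL-Analysis.Analysis"
begin

text \<open>Functions on the unit circle are modelled as functions complex \<Rightarrow> real,
  evaluated at cis theta. Normalized Lebesgue measure: (1/(2 pi)) d theta.\<close>

definition fourier_coeff :: "(complex \<Rightarrow> real) \<Rightarrow> int \<Rightarrow> complex" where
  "fourier_coeff f n =
     (1 / (2 * pi)) * (LINT \<theta>:{0..2*pi}|lebesgue. complex_of_real (f (cis \<theta>)) * cis (- (of_int n) * \<theta>))"

definition alt_step :: "real \<Rightarrow> nat \<Rightarrow> (complex \<Rightarrow> real) \<Rightarrow> bool" where
  "alt_step c N f \<longleftrightarrow>
     (if N = 0 then (AE \<theta> in lebesgue. f (cis \<theta>) = c)
      else c > 0 \<and>
        (\<exists>t :: nat \<Rightarrow> real.
            (\<forall>k < 2 * N. t k < t (Suc k)) \<and> t (2 * N) = t 0 + 2 * pi \<and>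
            (\<forall>k < 2 * N. AE \<theta> in lebesgue.
                 \<theta> \<in> {t k <..< t (Suc k)} \<longrightarrow> f (cis \<theta>) = c * (-1) ^ k)))"

end

theory Submission
  imports Defs "HOL-Computational_Algebra.Polynomial"
begin


lemma AE_periodic:
  fixes Q :: "complex \<Rightarrow> bool"
  assumes "AE \<theta> in lebesgue. \<theta> \<in> {a<..<a+2*pi} \<longrightarrow> Q (cis \<theta>)"
  shows "AE \<theta> in lebesgue. Q (cis \<theta>)"
proof -
  from assms obtain N where N: "N \<in> null_sets lebesgue"
    "{\<theta> \<in> space lebesgue. \<not>(\<theta> \<in> {a<..<a+2*pi} \<longrightarrow> Q (cis \<theta>))} \<subseteq> N"
    using assms unfolding eventually_ae_filter by auto
  define B0 where "B0 = {\<theta>. \<theta> \<in> {a<..<a+2*pi} \<and> \<not> Q (cis \<theta>)}"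
  have "B0 \<subseteq> N" using N(2) by (auto simp: B0_def)
  hence nB0: "negligible B0" using N(1) negligible_subset negligible_iff_null_sets by metis
  define S where "S = (\<Union>m. (\<lambda>x. 2*pi * of_int (m::int) + x) ` B0) \<union> range (\<lambda>m::int. a + 2*pi * of_int m)"
  have n1: "negligible (\<Union>m. (\<lambda>x. 2*pi * of_int (m::int) + x) ` B0)"
    by (rule negligible_countable_Union) (auto intro: negligible_translation nB0)
  have "range (\<lambda>m::int. a + 2*pi * of_int m) = \<Union> ((\<lambda>x. {x}) ` range (\<lambda>m::int. a + 2*pi * of_int m))"
    by auto
  also have "negligible \<dots>"
    by (rule negligible_countable_Union) auto
  finally have "negligible S" using n1 unfolding S_def by (rule negligible_Un[rotated])
  hence "S \<in> null_sets lebesgue" by (simp add: negligible_iff_null_sets)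
  moreover have "{\<theta> \<in> space lebesgue. \<not> Q (cis \<theta>)} \<subseteq> S"
  proof clarify
    fix \<theta> assume nq: "\<not> Q (cis \<theta>)"
    define m where "m = \<lfloor>(\<theta> - a)/(2*pi)\<rfloor>"
    define y where "y = \<theta> - 2*pi * of_int m"
    have "of_int m \<le> (\<theta> - a)/(2*pi)" "(\<theta> - a)/(2*pi) < of_int m + 1"
      unfolding m_def by linarith+
    hence y1: "a \<le> y" "y < a + 2*pi" unfolding y_def by (auto simp: field_simps)
    have "cis y = cis \<theta> / cis (2*pi * of_int m)" unfolding y_def by (simp only: cis_divide)
    hence cy: "cis y = cis \<theta>" by simp
    show "\<theta> \<in> S"
    proof (cases "y = a")
      case True
      then show ?thesis unfolding S_def y_def by auto
    next
      case False
      with y1 have "y \<in> B0" using nq cy by (auto simp: B0_def)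
      moreover have "\<theta> = 2*pi * of_int m + y" unfolding y_def by simp
      ultimately show ?thesis unfolding S_def by blast
    qed
  qed
  ultimately show ?thesis by (rule AE_I')
qed


lemma cos_outside:
  assumes "0 < h" "h < pi" "h < y" "y < 2*pi - h"
  shows "cos y < cos h"
proof (cases "y \<le> pi")
  case True
  then show ?thesis using assms by (intro cos_monotone_0_pi) auto
next
  case False
  have "cos y = cos (2*pi - y)" by (simp add: cos_diff)
  also have "\<dots> < cos h" using assms False by (intro cos_monotone_0_pi) auto
  finally show ?thesis .
qed

lemma cos_inside:
  assumes "\<bar>x\<bar> < h" "h < pi"
  shows "cos h < cos x"
proof -
  have "cos x = cos \<bar>x\<bar>" by (simp add: abs_if)
  also have "cos h < cos \<bar>x\<bar>" using assms by (intro cos_monotone_0_pi) auto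
  finally show ?thesis by simp
qed

lemma factor_sign:
  fixes t0 a b \<theta> :: real
  assumes "t0 < a" "a < b" "b \<le> t0 + 2*pi" "t0 < \<theta>" "\<theta> < t0 + 2*pi"
  shows "\<theta> \<in> {a<..<b} \<Longrightarrow> cos ((b-a)/2) - cos (\<theta> - (a+b)/2) < 0"
    and "\<theta> < a \<or> b < \<theta> \<Longrightarrow> cos ((b-a)/2) - cos (\<theta> - (a+b)/2) > 0"
proof -
  assume "\<theta> \<in> {a<..<b}"
  then show "cos ((b-a)/2) - cos (\<theta> - (a+b)/2) < 0"
    using assms by (intro cos_inside[THEN diff_less_0_iff_less[THEN iffD2]]) (auto simp: abs_less_iff field_simps)
next
  assume o: "\<theta> < a \<or> b < \<theta>"
  show "cos ((b-a)/2) - cos (\<theta> - (a+b)/2) > 0"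
  proof (cases "\<theta> < a")
    case True
    have "cos (\<theta> - (a+b)/2) = cos ((a+b)/2 - \<theta>)" by (metis cos_minus minus_diff_eq)
    also have "\<dots> < cos ((b-a)/2)" using assms True by (intro cos_outside) (auto simp: field_simps)
    finally show ?thesis by simp
  next
    case False
    with o have "b < \<theta>" by auto
    then have "cos (\<theta> - (a+b)/2) < cos ((b-a)/2)" using assms by (intro cos_outside) (auto simp: field_simps)
    then show ?thesis by simp
  qed
qed

lemma mono_t:
  fixes t :: "nat \<Rightarrow> real"
  assumes "\<forall>k < n. t k < t (Suc k)"
  shows "i < j \<Longrightarrow> j \<le> n \<Longrightarrow> t i < t j"
proof (induction j)
  case 0 then show ?case by simp
next
  case (Suc j)
  then show ?case using assms
    by (metis Suc_le_lessD dual_order.strict_trans le_eq_less_or_eq less_Suc_eq less_imp_le_nat)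
qed

lemma find_interval:
  fixes t :: "nat \<Rightarrow> real"
  assumes "t 0 < \<theta>" "\<theta> < t n" "\<theta> \<notin> t ` {..n}"
  shows "\<exists>k<n. t k < \<theta> \<and> \<theta> < t (Suc k)"
  using assms
proof (induction n)
  case 0 then show ?case by simp
next
  case (Suc n)
  show ?case
  proof (cases "\<theta> < t n")
    case True
    have "\<theta> \<notin> t ` {..n}" using Suc.prems by auto
    then obtain k where "k<n" "t k < \<theta> \<and> \<theta> < t (Suc k)" using Suc True by blast
    then show ?thesis by (intro exI[of _ k]) auto
  next
    case False
    have "\<theta> \<noteq> t n" using Suc.prems by auto
    then have "t n < \<theta>" using False by auto
    then show ?thesis using Suc.prems by auto
  qed
qed


lemma re_eq: "complex_of_real (Re w) = (w + cnj w) / 2"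
  by (simp add: complex_add_cnj)

lemma quad_factor:
  fixes z e :: complex and A :: real
  assumes "norm z = 1"
  shows "z * complex_of_real (A - Re (z * e)) = poly [: - cnj e / 2, complex_of_real A, - e / 2 :] z"
proof -
  have zc: "z * cnj z = 1" using complex_norm_square[of z] assms by simp
  have z0: "z \<noteq> 0" using assms by auto
  have cz: "cnj z = 1 / z" using zc z0 by (simp add: field_simps)
  show ?thesis
    unfolding of_real_diff re_eq using z0
    by (simp add: cz field_simps)
qed

lemma trigpoly:
  fixes A :: "nat \<Rightarrow> real" and e :: "nat \<Rightarrow> complex"
  shows "\<exists>q. degree q \<le> 2*m \<and> (\<forall>z. norm z = 1 \<longrightarrow>
            z^m * complex_of_real (\<Prod>j<m. A j - Re (z * e j)) = poly q z)"
proof (induction m)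
  case 0
  show ?case by (intro exI[of _ "[:1:]"]) simp
next
  case (Suc m)
  then obtain q where q: "degree q \<le> 2*m" "\<forall>z. norm z = 1 \<longrightarrow>
            z^m * complex_of_real (\<Prod>j<m. A j - Re (z * e j)) = poly q z" by blast
  define r where "r = [: - cnj (e m) / 2, complex_of_real (A m), - e m / 2 :]"
  have "degree r \<le> 2" unfolding r_def by simp
  hence "degree (q * r) \<le> 2 * Suc m" using q(1) degree_mult_le[of q r] by simp
  moreover have "\<forall>z. norm z = 1 \<longrightarrow>
      z^Suc m * complex_of_real (\<Prod>j<Suc m. A j - Re (z * e j)) = poly (q * r) z"
  proof (intro allI impI)
    fix z :: complex assume z: "norm z = 1"
    have "z^Suc m * complex_of_real (\<Prod>j<Suc m. A j - Re (z * e j))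
        = (z^m * complex_of_real (\<Prod>j<m. A j - Re (z * e j))) * (z * complex_of_real (A m - Re (z * e m)))"
      by (simp add: algebra_simps)
    also have "\<dots> = poly q z * poly r z" using q(2) z quad_factor[OF z] unfolding r_def by simp
    finally show "z^Suc m * complex_of_real (\<Prod>j<Suc m. A j - Re (z * e j)) = poly (q * r) z" by simp
  qed
  ultimately show ?case by blast
qed

lemma trigpoly_sum:
  fixes A :: "nat \<Rightarrow> real" and e :: "nat \<Rightarrow> complex"
  shows "\<exists>a::nat \<Rightarrow> complex. \<forall>\<theta>. complex_of_real (\<Prod>j<m. A j - Re (cis \<theta> * e j))
            = (\<Sum>i\<le>2*m. a i * cis ((of_int (int i - int m)) * \<theta>))"
proof -
  obtain q where q: "degree q \<le> 2*m" "\<forall>z. norm z = 1 \<longrightarrow>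
            z^m * complex_of_real (\<Prod>j<m. A j - Re (z * e j)) = poly q z"
    using trigpoly by blast
  show ?thesis
  proof (intro exI[of _ "coeff q"] allI)
    fix \<theta> :: real
    have "poly q (cis \<theta>) = (\<Sum>i\<le>2*m. coeff q i * cis \<theta> ^ i)"
      unfolding poly_altdef using q(1)
      by (intro sum.mono_neutral_left) (auto simp: coeff_eq_0)
    moreover have "cis \<theta> ^ m * complex_of_real (\<Prod>j<m. A j - Re (cis \<theta> * e j)) = poly q (cis \<theta>)"
      using q(2) norm_cis[of \<theta>] by blast
    ultimately have "cis \<theta> ^ m * complex_of_real (\<Prod>j<m. A j - Re (cis \<theta> * e j)) = (\<Sum>i\<le>2*m. coeff q i * cis \<theta> ^ i)"
      by simp
    hence "complex_of_real (\<Prod>j<m. A j - Re (cis \<theta> * e j)) = (\<Sum>i\<le>2*m. coeff q i * cis \<theta> ^ i) / cis \<theta> ^ m"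
      by (simp add: field_simps)
    also have "\<dots> = (\<Sum>i\<le>2*m. coeff q i * (cis \<theta> ^ i / cis \<theta> ^ m))"
      by (simp add: sum_divide_distrib)
    also have "\<dots> = (\<Sum>i\<le>2*m. coeff q i * cis ((of_int (int i - int m)) * \<theta>))"
    proof (intro sum.cong refl)
      fix i assume "i \<in> {..2*m}"
      have "cis \<theta> ^ i / cis \<theta> ^ m = cis (real i * \<theta>) / cis (real m * \<theta>)" by (simp only: Complex.DeMoivre)
      also have "\<dots> = cis ((of_int (int i - int m)) * \<theta>)" by (simp add: cis_divide algebra_simps)
      finally show "coeff q i * (cis \<theta> ^ i / cis \<theta> ^ m) = coeff q i * cis ((of_int (int i - int m)) * \<theta>)" by simp
    qed
    finally show "complex_of_real (\<Prod>j<m. A j - Re (cis \<theta> * e j))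
            = (\<Sum>i\<le>2*m. coeff q i * cis ((of_int (int i - int m)) * \<theta>))" .
  qed
qed


lemma mono_t_le:
  fixes t :: "nat \<Rightarrow> real"
  assumes "\<forall>k < n. t k < t (Suc k)" "i \<le> j" "j \<le> n"
  shows "t i \<le> t j"
  using mono_t[OF assms(1), of i j] assms by (cases "i = j") auto

lemma sign_prod_lemma:
  fixes f :: "nat \<Rightarrow> real"
  assumes "\<And>j. j < N \<Longrightarrow> j \<noteq> j0 \<Longrightarrow> f j > 0"
  shows "j0 < N \<Longrightarrow> f j0 < 0 \<Longrightarrow> (\<Prod>j<N. f j) < 0"
    and "j0 \<ge> N \<Longrightarrow> (\<Prod>j<N. f j) > 0"
proof -
  assume "j0 \<ge> N"
  then show "(\<Prod>j<N. f j) > 0" using assms by (intro prod_pos) auto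
next
  assume j0: "j0 < N" "f j0 < 0"
  have "(\<Prod>j<N. f j) = f j0 * (\<Prod>j\<in>{..<N} - {j0}. f j)"
    using j0 by (subst prod.remove[of _ j0]) auto
  moreover have "(\<Prod>j\<in>{..<N} - {j0}. f j) > 0" using assms by (intro prod_pos) auto
  ultimately show "(\<Prod>j<N. f j) < 0" using j0 by (simp add: mult_neg_pos)
qed

lemma rep:
  assumes "alt_step c N \<psi>"
  shows "\<exists>A e. (AE \<theta> in lebesgue. (\<Prod>j<N. A j - Re (cis \<theta> * e j)) \<noteq> 0 \<and>
                  \<psi> (cis \<theta>) = c * sgn (\<Prod>j<N. A j - Re (cis \<theta> * e j))) \<and> (N > 0 \<longrightarrow> c > 0)"
proof (cases "N = 0")
  case True
  then show ?thesis using assms unfolding alt_step_def by simp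
next
  case False
  then obtain t where t: "c > 0" "\<forall>k < 2 * N. t k < t (Suc k)" "t (2 * N) = t 0 + 2 * pi"
    "\<forall>k < 2 * N. AE \<theta> in lebesgue. \<theta> \<in> {t k <..< t (Suc k)} \<longrightarrow> \<psi> (cis \<theta>) = c * (-1) ^ k"
    using assms unfolding alt_step_def by auto
  define A where "A j = cos ((t (2*j+2) - t (2*j+1))/2)" for j
  define e where "e j = cis (- ((t (2*j+1) + t (2*j+2))/2))" for j
  define P where "P \<theta> = (\<Prod>j<N. A j - Re (cis \<theta> * e j))" for \<theta>
  have fac: "A j - Re (cis \<theta> * e j) = cos ((t (2*j+2) - t (2*j+1))/2) - cos (\<theta> - (t (2*j+1) + t (2*j+2))/2)"
    for j \<theta> unfolding A_def e_def by (simp add: cis_mult)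
  have key: "P \<theta> \<noteq> 0 \<and> sgn (P \<theta>) = (-1) ^ k"
    if k: "k < 2*N" "t k < \<theta>" "\<theta> < t (Suc k)" for k \<theta>
  proof -
    have th: "t 0 < \<theta>" "\<theta> < t 0 + 2*pi"
      using k mono_t_le[OF t(2), of 0 k] mono_t_le[OF t(2), of "Suc k" "2*N"] t(3) by auto
    have pos: "A j - Re (cis \<theta> * e j) > 0" if "j < N" "j \<noteq> k div 2 \<or> even k" for j
    proof -
      have a: "t 0 < t (2*j+1)" "t (2*j+1) < t (2*j+2)" "t (2*j+2) \<le> t 0 + 2*pi"
        using mono_t[OF t(2), of 0 "2*j+1"] mono_t[OF t(2), of "2*j+1" "2*j+2"]
          mono_t_le[OF t(2), of "2*j+2" "2*N"] t(3) that by auto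
      have "k \<noteq> 2*j+1" using that by auto
      hence "k < 2*j+1 \<or> k \<ge> 2*j+2" by auto
      hence "\<theta> < t (2*j+1) \<or> t (2*j+2) < \<theta>"
      proof
        assume "k < 2*j+1"
        then show ?thesis using k mono_t_le[OF t(2), of "Suc k" "2*j+1"] that by auto
      next
        assume "k \<ge> 2*j+2"
        then show ?thesis using k mono_t_le[OF t(2), of "2*j+2" k] by auto
      qed
      then show ?thesis unfolding fac using factor_sign(2)[OF a th] by simp
    qed
    show ?thesis
    proof (cases "even k")
      case True
      have "P \<theta> > 0" unfolding P_def
        by (rule sign_prod_lemma(2)[of N N]) (use pos True in auto)
      then show ?thesis using True by simp
    next
      case False
      define j0 where "j0 = k div 2"
      have kj: "k = 2*j0+1" using False unfolding j0_def by presburger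
      have j0N: "j0 < N" using k kj by auto
      have a: "t 0 < t (2*j0+1)" "t (2*j0+1) < t (2*j0+2)" "t (2*j0+2) \<le> t 0 + 2*pi"
        using mono_t[OF t(2), of 0 "2*j0+1"] mono_t[OF t(2), of "2*j0+1" "2*j0+2"]
          mono_t_le[OF t(2), of "2*j0+2" "2*N"] t(3) j0N by auto
      have "\<theta> \<in> {t (2*j0+1)<..<t (2*j0+2)}" using k kj by auto
      hence neg: "A j0 - Re (cis \<theta> * e j0) < 0" unfolding fac using factor_sign(1)[OF a th] by simp
      have "P \<theta> < 0" unfolding P_def
        by (rule sign_prod_lemma(1)[of N j0]) (use pos j0N neg j0_def in auto)
      then show ?thesis using False by simp
    qed
  qed
  have ae1: "AE \<theta> in lebesgue. \<forall>k\<in>{..<2*N}. \<theta> \<in> {t k <..< t (Suc k)} \<longrightarrow> \<psi> (cis \<theta>) = c * (-1) ^ k"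
    using t(4) by (intro AE_finite_allI) auto
  have ae2: "AE \<theta> in lebesgue. \<theta> \<notin> t ` {..2*N}"
    by (rule AE_discrete_difference) (auto intro: countable_finite)
  have "AE \<theta> in lebesgue. \<theta> \<in> {t 0<..<t 0 + 2*pi} \<longrightarrow> P \<theta> \<noteq> 0 \<and> \<psi> (cis \<theta>) = c * sgn (P \<theta>)"
    using ae1 ae2
  proof eventually_elim
    case (elim \<theta>)
    show ?case
    proof
      assume "\<theta> \<in> {t 0<..<t 0 + 2*pi}"
      then obtain k where k: "k < 2*N" "t k < \<theta>" "\<theta> < t (Suc k)"
        using find_interval[of t \<theta> "2*N"] elim t(3) by auto
      then show "P \<theta> \<noteq> 0 \<and> \<psi> (cis \<theta>) = c * sgn (P \<theta>)" using key[OF k] elim by auto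
    qed
  qed
  hence "AE \<theta> in lebesgue. P \<theta> \<noteq> 0 \<and> \<psi> (cis \<theta>) = c * sgn (P \<theta>)"
    unfolding P_def by (rule AE_periodic[where Q = "\<lambda>z. (\<Prod>j<N. A j - Re (z * e j)) \<noteq> 0 \<and> \<psi> z = c * sgn (\<Prod>j<N. A j - Re (z * e j))"])
  then show ?thesis unfolding P_def using t(1) by blast
qed


lemma si_bound:
  fixes f :: "real \<Rightarrow> 'b::{banach, second_countable_topology}"
  assumes "f \<in> borel_measurable lebesgue" "\<forall>x\<in>{a..b}. norm (f x) \<le> B"
  shows "set_integrable lebesgue {a..b} f"
proof (rule set_integrable_bound[of lebesgue "{a..b}" "\<lambda>_. B"])
  show "set_integrable lebesgue {a..b} (\<lambda>_. B)"
    by (rule absolutely_integrable_on_const) simp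
  show "set_borel_measurable lebesgue {a..b} f"
    unfolding set_borel_measurable_def using assms(1)
    by (intro borel_measurable_scaleR borel_measurable_indicator) auto
  show "AE x in lebesgue. x \<in> {a..b} \<longrightarrow> norm (f x) \<le> norm B"
    using assms(2) by (auto intro!: AE_I2 intro: order_trans[OF _ abs_ge_self])
qed

lemma cont_meas:
  fixes f :: "real \<Rightarrow> 'b::topological_space"
  shows "continuous_on UNIV f \<Longrightarrow> f \<in> borel_measurable lebesgue"
  by (intro measurable_completion) (simp add: borel_measurable_continuous_onI)

lemma cont_P:
  "continuous_on UNIV (\<lambda>\<theta>. (\<Prod>j<N. A j - Re (cis \<theta> * e j)))"
  by (intro continuous_intros)

lemma meas_P:
  "(\<lambda>\<theta>. (\<Prod>j<N. A j - Re (cis \<theta> * e j))) \<in> borel_measurable lebesgue"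
  by (rule cont_meas[OF cont_P])

lemma meas_sgnP:
  "(\<lambda>\<theta>. c * sgn (\<Prod>j<N. A j - Re (cis \<theta> * e j))) \<in> borel_measurable lebesgue"
  using meas_P by measurable


lemma set_integral_sum':
  fixes f :: "'i \<Rightarrow> 'z \<Rightarrow> 'b::{banach, second_countable_topology}"
  assumes "\<And>i. i \<in> S \<Longrightarrow> set_integrable M A (f i)"
  shows "(LINT x:A|M. (\<Sum>i\<in>S. f i x)) = (\<Sum>i\<in>S. LINT x:A|M. f i x)"
proof -
  have "(LINT x:A|M. (\<Sum>i\<in>S. f i x)) = integral\<^sup>L M (\<lambda>x. \<Sum>i\<in>S. indicator A x *\<^sub>R f i x)"
    unfolding set_lebesgue_integral_def by (simp add: scaleR_sum_right)
  also have "\<dots> = (\<Sum>i\<in>S. LINT x:A|M. f i x)"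
    unfolding set_lebesgue_integral_def
    by (rule Bochner_Integration.integral_sum[where f="\<lambda>i x. indicator A x *\<^sub>R f i x"]) (use assms in \<open>auto simp: set_integrable_def\<close>)
  finally show ?thesis .
qed

lemma set_integral_cnj:
  "(LINT x:A|M. cnj (f x)) = cnj (LINT x:A|M. f x)"
proof -
  have "(\<lambda>x. indicator A x *\<^sub>R cnj (f x)) = (\<lambda>x. cnj (indicator A x *\<^sub>R f x))"
    by (simp add: fun_eq_iff)
  then show ?thesis unfolding set_lebesgue_integral_def by (simp only: Bochner_Integration.integral_cnj)
qed

lemma meas_cis: "(\<lambda>\<theta>::real. cis (a * \<theta>)) \<in> borel_measurable lebesgue"
  by (rule cont_meas) (intro continuous_intros)


lemma meas_ofreal: "f \<in> borel_measurable M \<Longrightarrow> (\<lambda>x. complex_of_real (f x)) \<in> borel_measurable M"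
  by (rule measurable_compose[OF _ borel_measurable_of_real])

lemma main:
  fixes \<psi> \<phi> :: "complex \<Rightarrow> real" and A A' :: "nat \<Rightarrow> real" and e e' :: "nat \<Rightarrow> complex"
    and N :: nat and c d :: real
  assumes ae\<psi>: "AE \<theta> in lebesgue. (\<Prod>j<N. A j - Re (cis \<theta> * e j)) \<noteq> 0 \<and>
                  \<psi> (cis \<theta>) = c * sgn (\<Prod>j<N. A j - Re (cis \<theta> * e j))"
    and ae\<phi>: "AE \<theta> in lebesgue. (\<Prod>j<N. A' j - Re (cis \<theta> * e' j)) \<noteq> 0 \<and>
                  \<phi> (cis \<theta>) = d * sgn (\<Prod>j<N. A' j - Re (cis \<theta> * e' j))"
    and nonneg: "\<And>\<theta>. (c * sgn (\<Prod>j<N. A j - Re (cis \<theta> * e j)) - d * sgn (\<Prod>j<N. A' j - Re (cis \<theta> * e' j)))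
                    * (\<Prod>j<N. A j - Re (cis \<theta> * e j)) \<ge> 0"
    and F: "\<forall>n::int. 0 \<le> n \<and> n \<le> int N \<longrightarrow> fourier_coeff \<psi> n = fourier_coeff \<phi> n"
  shows "AE \<theta> in lebesgue. \<psi> (cis \<theta>) = \<phi> (cis \<theta>)"
proof -
  define P where "P \<theta> = (\<Prod>j<N. A j - Re (cis \<theta> * e j))" for \<theta>
  define R where "R \<theta> = (\<Prod>j<N. A' j - Re (cis \<theta> * e' j))" for \<theta>
  define f1 where "f1 \<theta> = c * sgn (P \<theta>)" for \<theta>
  define f2 where "f2 \<theta> = d * sgn (R \<theta>)" for \<theta>
  define I :: "real set" where "I = {0..2*pi}"
  have mP: "P \<in> borel_measurable lebesgue" unfolding P_def by (rule meas_P)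
  have m1: "f1 \<in> borel_measurable lebesgue" unfolding f1_def P_def by (rule meas_sgnP)
  have m2: "f2 \<in> borel_measurable lebesgue" unfolding f2_def R_def by (rule meas_sgnP)
  have ae1: "AE \<theta> in lebesgue. f1 \<theta> = \<psi> (cis \<theta>)" using ae\<psi> unfolding f1_def P_def by auto
  have ae2: "AE \<theta> in lebesgue. f2 \<theta> = \<phi> (cis \<theta>)" using ae\<phi> unfolding f2_def R_def by auto
  have m\<psi>: "(\<lambda>\<theta>. \<psi> (cis \<theta>)) \<in> borel_measurable lebesgue" by (rule borel_measurable_AE[OF m1 ae1])
  have m\<phi>: "(\<lambda>\<theta>. \<phi> (cis \<theta>)) \<in> borel_measurable lebesgue" by (rule borel_measurable_AE[OF m2 ae2])
  have Isets: "I \<in> sets lebesgue" unfolding I_def by simp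
  have fc1: "fourier_coeff \<psi> n = (1/(2*pi)) * (LINT \<theta>:I|lebesgue. complex_of_real (f1 \<theta>) * cis (- of_int n * \<theta>))" for n
    unfolding fourier_coeff_def I_def
  proof (rule arg_cong[where f="\<lambda>x. complex_of_real (1/(2*pi)) * x"], rule set_lebesgue_integral_cong_AE)
    show "(\<lambda>\<theta>. complex_of_real (\<psi> (cis \<theta>)) * cis (- of_int n * \<theta>)) \<in> borel_measurable lebesgue"
      by (intro borel_measurable_times meas_ofreal m\<psi> meas_cis)
    show "(\<lambda>\<theta>. complex_of_real (f1 \<theta>) * cis (- of_int n * \<theta>)) \<in> borel_measurable lebesgue"
      by (intro borel_measurable_times meas_ofreal m1 meas_cis)
    show "AE x\<in>{0..2 * pi} in lebesgue. complex_of_real (\<psi> (cis x)) * cis (- of_int n * x) =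
          complex_of_real (f1 x) * cis (- of_int n * x)"
      using ae1 by auto
  qed simp
  have fc2: "fourier_coeff \<phi> n = (1/(2*pi)) * (LINT \<theta>:I|lebesgue. complex_of_real (f2 \<theta>) * cis (- of_int n * \<theta>))" for n
    unfolding fourier_coeff_def I_def
  proof (rule arg_cong[where f="\<lambda>x. complex_of_real (1/(2*pi)) * x"], rule set_lebesgue_integral_cong_AE)
    show "(\<lambda>\<theta>. complex_of_real (\<phi> (cis \<theta>)) * cis (- of_int n * \<theta>)) \<in> borel_measurable lebesgue"
      by (intro borel_measurable_times meas_ofreal m\<phi> meas_cis)
    show "(\<lambda>\<theta>. complex_of_real (f2 \<theta>) * cis (- of_int n * \<theta>)) \<in> borel_measurable lebesgue"
      by (intro borel_measurable_times meas_ofreal m2 meas_cis)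
    show "AE x\<in>{0..2 * pi} in lebesgue. complex_of_real (\<phi> (cis x)) * cis (- of_int n * x) =
          complex_of_real (f2 x) * cis (- of_int n * x)"
      using ae2 by auto
  qed simp
  have int1: "set_integrable lebesgue I (\<lambda>\<theta>. complex_of_real (f1 \<theta>) * cis (a * \<theta>))" for a
    unfolding I_def
  proof (rule si_bound[where B="\<bar>c\<bar>"])
    show "(\<lambda>\<theta>. complex_of_real (f1 \<theta>) * cis (a * \<theta>)) \<in> borel_measurable lebesgue"
      by (intro borel_measurable_times meas_ofreal m1 meas_cis)
  qed (auto simp: f1_def norm_mult abs_mult sgn_real_def)
  have int2: "set_integrable lebesgue I (\<lambda>\<theta>. complex_of_real (f2 \<theta>) * cis (a * \<theta>))" for a
    unfolding I_def
  proof (rule si_bound[where B="\<bar>d\<bar>"])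
    show "(\<lambda>\<theta>. complex_of_real (f2 \<theta>) * cis (a * \<theta>)) \<in> borel_measurable lebesgue"
      by (intro borel_measurable_times meas_ofreal m2 meas_cis)
  qed (auto simp: f2_def norm_mult abs_mult sgn_real_def)
  define g where "g \<theta> = f1 \<theta> - f2 \<theta>" for \<theta>
  have intg: "set_integrable lebesgue I (\<lambda>\<theta>. complex_of_real (g \<theta>) * cis (a * \<theta>))" for a
  proof -
    have "set_integrable lebesgue I (\<lambda>\<theta>. complex_of_real (f1 \<theta>) * cis (a * \<theta>) - complex_of_real (f2 \<theta>) * cis (a * \<theta>))"
      using int1 int2 by (rule set_integral_diff(1))
    then show ?thesis unfolding g_def by (simp add: algebra_simps)
  qed
  have Gm: "(LINT \<theta>:I|lebesgue. complex_of_real (g \<theta>) * cis (- of_int m * \<theta>)) = 0"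
    if "0 \<le> m" "m \<le> int N" for m
  proof -
    have "(LINT \<theta>:I|lebesgue. complex_of_real (f1 \<theta>) * cis (- of_int m * \<theta>))
        = (LINT \<theta>:I|lebesgue. complex_of_real (f2 \<theta>) * cis (- of_int m * \<theta>))"
      using F that fc1[of m] fc2[of m] by simp
    moreover have "(LINT \<theta>:I|lebesgue. complex_of_real (g \<theta>) * cis (- of_int m * \<theta>))
        = (LINT \<theta>:I|lebesgue. complex_of_real (f1 \<theta>) * cis (- of_int m * \<theta>) - complex_of_real (f2 \<theta>) * cis (- of_int m * \<theta>))"
      unfolding g_def by (simp add: algebra_simps)
    moreover have "(LINT \<theta>:I|lebesgue. complex_of_real (f1 \<theta>) * cis (- of_int m * \<theta>) - complex_of_real (f2 \<theta>) * cis (- of_int m * \<theta>))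
       = (LINT \<theta>:I|lebesgue. complex_of_real (f1 \<theta>) * cis (- of_int m * \<theta>)) - (LINT \<theta>:I|lebesgue. complex_of_real (f2 \<theta>) * cis (- of_int m * \<theta>))"
      by (rule set_integral_diff(2)[OF int1 int2])
    ultimately show ?thesis by (simp only: diff_self)
  qed
  have Gn: "(LINT \<theta>:I|lebesgue. complex_of_real (g \<theta>) * cis (of_int n * \<theta>)) = 0"
    if "\<bar>n\<bar> \<le> int N" for n
  proof (cases "n \<le> 0")
    case True
    then show ?thesis using Gm[of "-n"] that by simp
  next
    case False
    have "(LINT \<theta>:I|lebesgue. complex_of_real (g \<theta>) * cis (of_int n * \<theta>))
        = (LINT \<theta>:I|lebesgue. cnj (complex_of_real (g \<theta>) * cis (- of_int n * \<theta>)))"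
      by (simp add: cis_cnj)
    also have "\<dots> = cnj (LINT \<theta>:I|lebesgue. complex_of_real (g \<theta>) * cis (- of_int n * \<theta>))"
      by (rule set_integral_cnj)
    also have "\<dots> = 0" using Gm[of n] that False by simp
    finally show ?thesis .
  qed
  obtain a where a: "\<forall>\<theta>. complex_of_real (P \<theta>)
            = (\<Sum>i\<le>2*N. a i * cis ((of_int (int i - int N)) * \<theta>))"
    using trigpoly_sum[where m=N and A=A and e=e] unfolding P_def by blast
  have "(LINT \<theta>:I|lebesgue. complex_of_real (g \<theta> * P \<theta>))
      = (LINT \<theta>:I|lebesgue. (\<Sum>i\<le>2*N. a i * (complex_of_real (g \<theta>) * cis ((of_int (int i - int N)) * \<theta>))))"
    using a by (simp add: sum_distrib_left algebra_simps)
  also have "\<dots> = (\<Sum>i\<le>2*N. LINT \<theta>:I|lebesgue. a i * (complex_of_real (g \<theta>) * cis ((of_int (int i - int N)) * \<theta>)))"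
    by (rule set_integral_sum') (auto intro: intg)
  also have "\<dots> = 0"
  proof (intro sum.neutral ballI)
    fix i assume "i \<in> {..2*N}"
    hence "\<bar>int i - int N\<bar> \<le> int N" by auto
    from Gn[OF this] show "(LINT \<theta>:I|lebesgue. a i * (complex_of_real (g \<theta>) * cis (of_int (int i - int N) * \<theta>))) = 0"
      by simp
  qed
  finally have "complex_of_real (LINT \<theta>:I|lebesgue. g \<theta> * P \<theta>) = 0"
    by (simp only: set_integral_complex_of_real[symmetric])
  hence int0: "(LINT \<theta>:I|lebesgue. g \<theta> * P \<theta>) = 0" by simp
  have gPnn: "g \<theta> * P \<theta> \<ge> 0" for \<theta>
    using nonneg[of \<theta>] unfolding g_def f1_def f2_def P_def R_def by simp
  have intgP: "set_integrable lebesgue I (\<lambda>\<theta>. g \<theta> * P \<theta>)"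
  proof -
    have "compact ((\<lambda>\<theta>. P \<theta>) ` I)" unfolding I_def P_def
      by (intro compact_continuous_image continuous_on_subset[OF cont_P]) auto
    then obtain B where B: "\<forall>x\<in>I. \<bar>P x\<bar> \<le> B"
      by (metis compact_imp_bounded bounded_real image_eqI)
    show ?thesis unfolding I_def
    proof (rule si_bound[where B="(\<bar>c\<bar> + \<bar>d\<bar>) * B"])
      show "(\<lambda>\<theta>. g \<theta> * P \<theta>) \<in> borel_measurable lebesgue"
        unfolding g_def by (intro borel_measurable_times m1 m2 mP borel_measurable_diff)
      show "\<forall>x\<in>{0..2 * pi}. norm (g x * P x) \<le> (\<bar>c\<bar> + \<bar>d\<bar>) * B"
      proof
        fix x assume x: "x \<in> {0..2*pi}"
        have "\<bar>g x\<bar> \<le> \<bar>c\<bar> + \<bar>d\<bar>" unfolding g_def f1_def f2_def by (auto simp: sgn_real_def)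
        moreover have "\<bar>P x\<bar> \<le> B" using B x unfolding I_def by auto
        ultimately show "norm (g x * P x) \<le> (\<bar>c\<bar> + \<bar>d\<bar>) * B"
          by (simp add: abs_mult mult_mono)
      qed
    qed
  qed
  have "AE \<theta> in lebesgue. indicator I \<theta> *\<^sub>R (g \<theta> * P \<theta>) = 0"
    using int0 intgP gPnn unfolding set_lebesgue_integral_def set_integrable_def
    by (subst integral_nonneg_eq_0_iff_AE[symmetric]) (auto intro!: AE_I2 split: split_indicator)
  hence "AE \<theta> in lebesgue. \<theta> \<in> {0<..<0+2*pi} \<longrightarrow> \<psi> (cis \<theta>) = \<phi> (cis \<theta>)"
    using ae1 ae2 ae\<psi>
  proof eventually_elim
    case (elim \<theta>)
    show ?case
    proof
      assume "\<theta> \<in> {0<..<0+2*pi}"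
      hence "g \<theta> * P \<theta> = 0" using elim(1) unfolding I_def by auto
      moreover have "P \<theta> \<noteq> 0" using elim(4) unfolding P_def by auto
      ultimately have "f1 \<theta> = f2 \<theta>" unfolding g_def by simp
      then show "\<psi> (cis \<theta>) = \<phi> (cis \<theta>)" using elim by simp
    qed
  qed
  then show ?thesis by (rule AE_periodic[where Q="\<lambda>z. \<psi> z = \<phi> z"])
qed


theorem theorem5p2:
  fixes N :: nat and \<psi> \<phi> :: "complex \<Rightarrow> real"
  assumes "\<exists>c. alt_step c N \<psi>"
    and "\<exists>d. alt_step d N \<phi>"
    and "\<forall>n::int. 0 \<le> n \<and> n \<le> int N \<longrightarrow> fourier_coeff \<psi> n = fourier_coeff \<phi> n"
  shows "(\<forall>n::int. fourier_coeff \<psi> n = fourier_coeff \<phi> n) \<and>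
         (AE \<theta> in lebesgue. \<psi> (cis \<theta>) = \<phi> (cis \<theta>))"
proof -
  obtain c d where c: "alt_step c N \<psi>" and d: "alt_step d N \<phi>" using assms(1,2) by blast
  obtain A e where A: "AE \<theta> in lebesgue. (\<Prod>j<N. A j - Re (cis \<theta> * e j)) \<noteq> 0 \<and>
                  \<psi> (cis \<theta>) = c * sgn (\<Prod>j<N. A j - Re (cis \<theta> * e j))" and cpos: "N > 0 \<longrightarrow> c > 0"
    using rep[OF c] by blast
  obtain A' e' where A': "AE \<theta> in lebesgue. (\<Prod>j<N. A' j - Re (cis \<theta> * e' j)) \<noteq> 0 \<and>
                  \<phi> (cis \<theta>) = d * sgn (\<Prod>j<N. A' j - Re (cis \<theta> * e' j))" and dpos: "N > 0 \<longrightarrow> d > 0"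
    using rep[OF d] by blast
  have nn: "(x * sgn p - y * sgn r) * p \<ge> 0" if "x \<ge> y" "N > 0 \<longrightarrow> y > 0" "N = 0 \<longrightarrow> p = 1 \<and> r = 1"
    for x y p r :: real
  proof (cases "N = 0")
    case True then show ?thesis using that by simp
  next
    case False
    hence y: "y > 0" using that by simp
    have "(x * sgn p - y * sgn r) * p = x * \<bar>p\<bar> - y * (sgn r * p)" by (simp add: algebra_simps abs_sgn mult.commute)
    moreover have "y * (sgn r * p) \<le> y * \<bar>p\<bar>" using y by (intro mult_left_mono) (auto simp: sgn_real_def)
    moreover have "y * \<bar>p\<bar> \<le> x * \<bar>p\<bar>" using that(1) by (intro mult_right_mono) auto
    ultimately show ?thesis by linarith
  qed
  have ae: "AE \<theta> in lebesgue. \<psi> (cis \<theta>) = \<phi> (cis \<theta>)"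
  proof (cases "d \<le> c")
    case True
    show ?thesis
      by (rule main[OF A A' _ assms(3)]) (rule nn, use True dpos in auto)
  next
    case False
    have "AE \<theta> in lebesgue. \<phi> (cis \<theta>) = \<psi> (cis \<theta>)"
      by (rule main[OF A' A _ ]) (use False cpos assms(3) in \<open>auto intro!: nn\<close>)
    then show ?thesis by auto
  qed
  have m1: "(\<lambda>\<theta>. \<psi> (cis \<theta>)) \<in> borel_measurable lebesgue"
    by (rule borel_measurable_AE[OF meas_sgnP]) (use A in auto)
  have m2: "(\<lambda>\<theta>. \<phi> (cis \<theta>)) \<in> borel_measurable lebesgue"
    by (rule borel_measurable_AE[OF meas_sgnP]) (use A' in auto)
  have "fourier_coeff \<psi> n = fourier_coeff \<phi> n" for n :: int
    unfolding fourier_coeff_def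
  proof (rule arg_cong[where f="\<lambda>x. complex_of_real (1/(2*pi)) * x"], rule set_lebesgue_integral_cong_AE)
    show "(\<lambda>\<theta>. complex_of_real (\<psi> (cis \<theta>)) * cis (- of_int n * \<theta>)) \<in> borel_measurable lebesgue"
      by (intro borel_measurable_times meas_ofreal m1 meas_cis)
    show "(\<lambda>\<theta>. complex_of_real (\<phi> (cis \<theta>)) * cis (- of_int n * \<theta>)) \<in> borel_measurable lebesgue"
      by (intro borel_measurable_times meas_ofreal m2 meas_cis)
  qed (use ae in auto)
  with ae show ?thesis by blast
qed

end
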